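(* Let $n\geq 2$. Let $M$ be the $0/1$ matrix whose rows are indexed by the derangements $\pi$ of $\{1,\dots,n\}$, whose columns are indexed by the ordered pairs $(i,j)$ with $i,j\in\{1,\dots,n-1\}$ and $i\neq j$, and whose $(\pi,(i,j))$-entry is $1$ iff $\pi(i)=j$. Then $M$ has rank $(n-1)(n-2)$.
   Context: A derangement of $\{1,\dots,n\}$ is a permutation with no fixed points. *)

theory Defs
  imports Complex_Main "HOL-Library.Function_Algebras" "HOL-Combinatorics.Permutations"
begin

definition derangements :: "nat \<Rightarrow> (nat \<Rightarrow> nat) set" where
  "derangements n = {p. p permutes {1..n} \<and> (\<forall>x\<in>{1..n}. p x \<noteq> x)}"

definition mat_rank :: "'r set \<Rightarrow> 'c set \<Rightarrow> ('r \<Rightarrow> 'c \<Rightarrow> real) \<Rightarrow> nat" where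
  "mat_rank R C M =
     vector_space.dim (\<lambda>a (f :: 'c \<Rightarrow> real) c. a * f c)
       ((\<lambda>r c. if c \<in> C then M r c else 0) ` R)"

end

theory Submission
  imports Defs "HOL-Combinatorics.Cycles"
begin

lemma sum_fun_apply: "(sum f A :: 'a \<Rightarrow> 'b::comm_monoid_add) x = (\<Sum>a\<in>A. f a x)"
  by (induct A rule: infinite_finite_induct) auto

lemma vs_fun: "vector_space (\<lambda>a (f :: 'c \<Rightarrow> real) c. a * f c)"
  by unfold_locales (auto simp: fun_eq_iff algebra_simps)

lemma cycle_eval:
  assumes "distinct L" "p < length L"
  shows "cycle_of_list L (L!p) = L ! (Suc p mod length L)"
proof -
  have "map (cycle_of_list L) L = rotate1 L" using cyclic_rotation[OF assms(1), of 1] by simp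
  hence "map (cycle_of_list L) L ! p = rotate1 L ! p" by simp
  thus ?thesis using assms(2) by (simp add: nth_rotate1)
qed

lemma delta_in_span:
  fixes m a b :: nat
  assumes ab: "a \<in> {1..m}" "b \<in> {1..m}" "a \<noteq> b"
  shows "(\<lambda>c. if c = (a,b) then 1 else 0 :: real) \<in> module.span (\<lambda>r (f::nat\<times>nat\<Rightarrow>real) c. r * f c)
     ((\<lambda>p c. if c \<in> {(i, j). i \<in> {1..m} \<and> j \<in> {1..m} \<and> i \<noteq> j}
        then (case c of (i,j) \<Rightarrow> if p i = j then 1 else 0) else 0) ` derangements (Suc m))"
proof -
  interpret vs: vector_space "\<lambda>r (f::nat\<times>nat\<Rightarrow>real) c. r * f c" by (rule vs_fun)
  define C where "C = {(i, j). i \<in> {1..m} \<and> j \<in> {1..m} \<and> i \<noteq> j}"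
  define row where "row = (\<lambda>p c. if c \<in> C then (case c of (i,j) \<Rightarrow> if p i = j then 1 else 0) else (0::real))"
  define Z where "Z = a # b # filter (\<lambda>x. x \<noteq> a \<and> x \<noteq> b) [1..<Suc m]"
  have Zd: "distinct Z" unfolding Z_def using ab by auto
  have Zs: "set Z = {1..m}" unfolding Z_def using ab by auto
  have Zl: "length Z = m" using distinct_card[OF Zd] Zs by simp
  have m2: "m \<ge> 2" using ab by auto
  define prev where "prev j = (if j = 0 then m - 1 else j - 1)" for j
  define nxt where "nxt t = (if t = m - 1 then 0 else Suc t)" for t
  define \<sigma> where "\<sigma> j = cycle_of_list (Suc m # rotate j Z)" for j
  have nZ: "Suc m \<notin> set Z" using Zs by auto
  have Zinj: "Z ! t = Z ! u \<longleftrightarrow> t = u" if "t < m" "u < m" for t u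
    using Zd Zl that nth_eq_iff_index_eq by metis
  have eval: "\<sigma> j (Z!t) = (if t = prev j then Suc m else Z ! nxt t)" if "j < m" "t < m" for j t
  proof -
    define L where "L = Suc m # rotate j Z"
    have Ld: "distinct L" using Zd nZ by (simp add: L_def)
    have Ll: "length L = Suc m" by (simp add: L_def Zl)
    define p where "p = (if j \<le> t then t - j else t + m - j)"
    have pm: "p < m" using that by (auto simp: p_def)
    have jp: "(j + p) mod m = t" using that by (auto simp: p_def)
    have Lp: "L ! Suc p = Z ! t" using pm jp by (simp add: L_def nth_rotate Zl)
    have e: "\<sigma> j (Z!t) = L ! (Suc (Suc p) mod Suc m)"
      using cycle_eval[OF Ld, of "Suc p"] pm Ll Lp by (simp add: \<sigma>_def L_def)
    show ?thesis
    proof (cases "t = prev j")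
      case True
      then have "p = m - 1" using that by (auto simp: p_def prev_def split: if_splits)
      then have "Suc (Suc p) mod Suc m = 0" using m2 by simp
      then show ?thesis using e True by (simp add: L_def)
    next
      case False
      then have pm1: "Suc p < m" using that pm by (auto simp: p_def prev_def split: if_splits)
      then have "Suc (Suc p) mod Suc m = Suc (Suc p)" by simp
      then have "\<sigma> j (Z!t) = Z ! ((j + Suc p) mod m)" using e pm1 by (simp add: L_def nth_rotate Zl)
      moreover have "(j + Suc p) mod m = nxt t"
      proof (cases "j \<le> t")
        case True
        then show ?thesis using that False by (auto simp: p_def nxt_def prev_def)
      next
        case False
        then have "j + Suc p = Suc t + m" using that by (simp add: p_def)
        moreover have "Suc t < m" using False \<open>t \<noteq> prev j\<close> that by (auto simp: prev_def)
        moreover have "(Suc t + m) mod m = Suc t" using \<open>Suc t < m\<close> by (metis mod_add_self2 mod_less)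
        ultimately show ?thesis using \<open>Suc t < m\<close> by (simp add: nxt_def)
      qed
      ultimately show ?thesis using False by simp
    qed
  qed
  have Lset: "set (Suc m # rotate j Z) = {1..Suc m}" for j using Zs by auto
  have nxtm: "nxt t < m" "nxt t \<noteq> t" if "t < m" for t using that m2 by (auto simp: nxt_def)
  have der: "\<sigma> j \<in> derangements (Suc m)" if "j < m" for j
  proof -
    have perm: "\<sigma> j permutes {1..Suc m}" unfolding \<sigma>_def using cycle_permutes Lset by metis
    have "\<sigma> j x \<noteq> x" if x: "x \<in> {1..Suc m}" for x
    proof (cases "x = Suc m")
      case True
      have Ld: "distinct (Suc m # rotate j Z)" using Zd nZ by simp
      have "\<sigma> j x = (Suc m # rotate j Z) ! (1 mod Suc m)"
        using cycle_eval[OF Ld, of 0] True m2 Zl by (auto simp: \<sigma>_def)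
      also have "\<dots> = rotate j Z ! 0" using m2 by simp
      also have "\<dots> \<in> set Z" using m2 Zl by (metis length_greater_0_conv list.size(3) nth_mem set_rotate length_rotate not_numeral_le_zero)
      finally show ?thesis using True nZ by auto
    next
      case False
      then have "x \<in> set Z" using x Zs by auto
      then obtain t where t: "t < m" "x = Z ! t" using Zl by (metis in_set_conv_nth)
      show ?thesis using eval[OF \<open>j<m\<close> t(1)] t nZ Zinj nxtm[OF t(1)] by (auto simp: Zl)
    qed
    then show ?thesis using perm by (auto simp: derangements_def)
  qed
  have inC: "(Z!t, Z!u) \<in> C \<longleftrightarrow> t \<noteq> u" if "t < m" "u < m" for t u
    using that Zinj Zs Zl nth_mem unfolding C_def by fastforce
  have Ccov: "\<exists>t u. t < m \<and> u < m \<and> x = (Z!t, Z!u)" if xC: "x \<in> C" for x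
  proof -
    obtain i k where x: "x = (i,k)" "i \<in> set Z" "k \<in> set Z" using xC Zs unfolding C_def by auto
    then show ?thesis using Zl by (metis in_set_conv_nth)
  qed
  have rowv: "row (\<sigma> j) (Z!t, Z!u) = (if t \<noteq> u \<and> t \<noteq> prev j \<and> u = nxt t then 1 else 0)"
    if "j < m" "t < m" "u < m" for j t u
  proof -
    have "Z!u \<in> set Z" using that Zl by simp
    then have "Z!u \<noteq> Suc m" using nZ by metis
    then show ?thesis
    using eval[OF that(1,2)] inC[OF that(2,3)] Zinj[OF nxtm(1)[OF that(2)] that(3)]
    unfolding row_def by auto
  qed
  define S where "S = (\<lambda>x. if \<exists>t<m. x = (Z!t, Z!(nxt t)) then 1 else (0::real))"
  have Sv: "S (Z!t, Z!u) = (if u = nxt t then 1 else 0)" if "t < m" "u < m" for t u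
    using that Zinj nxtm unfolding S_def by (smt (verit) prod.inject)
  have Sout: "S x = 0" if "x \<notin> C" for x
    using that inC nxtm unfolding S_def by (metis (no_types, lifting))
  have rowout: "row p x = 0" if "x \<notin> C" for x p using that by (simp add: row_def)
  have claim1: "(\<Sum>j<m. row (\<sigma> j)) x = real (m - 1) * S x" for x
  proof (cases "x \<in> C")
    case False then show ?thesis by (simp add: sum_fun_apply rowout Sout)
  next
    case True
    then obtain t u where tu: "t < m" "u < m" "x = (Z!t, Z!u)" using Ccov by blast
    show ?thesis
    proof (cases "u = nxt t")
      case False
      then show ?thesis using tu by (simp add: sum_fun_apply rowv Sv)
    next
      case True
      have "(\<Sum>j<m. row (\<sigma> j)) x = (\<Sum>j<m. 1 - (if j = nxt t then 1 else 0::real))"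
        unfolding sum_fun_apply
        apply (rule sum.cong[OF refl])
        using tu True nxtm[OF tu(1)] by (auto simp: rowv prev_def nxt_def)
      also have "\<dots> = real m - 1" using nxtm[OF tu(1)] by (simp add: sum_subtractf)
      finally show ?thesis using True tu Sv m2 by (simp add: of_nat_diff)
    qed
  qed
  have claim2: "S x - row (\<sigma> 1) x = (if x = (a,b) then 1 else 0)" for x
  proof (cases "x \<in> C")
    case False
    moreover have "(a,b) \<in> C" using ab by (auto simp: C_def)
    ultimately show ?thesis by (auto simp: rowout Sout)
  next
    case True
    then obtain t u where tu: "t < m" "u < m" "x = (Z!t, Z!u)" using Ccov by blast
    have ab': "a = Z!0" "b = Z!1" by (simp_all add: Z_def)
    have "x = (a,b) \<longleftrightarrow> t = 0 \<and> u = 1" using tu ab' Zinj m2 by auto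
    moreover have "prev 1 = 0" by (simp add: prev_def)
    moreover have "nxt 0 = 1" using m2 by (simp add: nxt_def)
    moreover have "1 < m" using m2 by simp
    ultimately show ?thesis using tu nxtm[OF tu(1)] by (auto simp: rowv Sv)
  qed
  define V where "V = row ` derangements (Suc m)"
  have eq: "(\<lambda>c. if c = (a,b) then 1 else 0 :: real) =
     (\<lambda>c. (1 / real (m - 1)) * (\<Sum>j<m. row (\<sigma> j)) c) - row (\<sigma> 1)"
  proof
    fix x
    have "real (m - 1) \<noteq> 0" using m2 by simp
    then show "(if x = (a,b) then 1 else 0 :: real) = ((\<lambda>c. (1 / real (m - 1)) * (\<Sum>j<m. row (\<sigma> j)) c) - row (\<sigma> 1)) x"
      using claim1[of x] claim2[of x] by simp
  qed
  have "(\<lambda>c. if c = (a,b) then 1 else 0 :: real) \<in> vs.span V"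
    unfolding eq
    apply (rule vs.span_diff)
     apply (rule vs.span_scale)
     apply (rule vs.span_sum)
     apply (rule vs.span_base)
    using der m2 apply (auto simp: V_def)[1]
    apply (rule vs.span_base)
    using der[of 1] m2 by (auto simp: V_def)
  then show ?thesis unfolding V_def row_def C_def by simp
qed

theorem lemma10:
  fixes n :: nat
  assumes "n \<ge> 2"
  shows "mat_rank (derangements n) {(i, j). i \<in> {1..n-1} \<and> j \<in> {1..n-1} \<and> i \<noteq> j}
           (\<lambda>\<pi> (i, j). if \<pi> i = j then 1 else 0)
         = (n - 1) * (n - 2)"
proof -
  interpret vs: vector_space "\<lambda>r (f::nat\<times>nat\<Rightarrow>real) c. r * f c" by (rule vs_fun)
  define m where "m = n - 1"
  have n: "n = Suc m" using assms by (simp add: m_def)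
  define C where "C = {(i, j). i \<in> {1..m} \<and> j \<in> {1..m} \<and> i \<noteq> j}"
  define row where "row = (\<lambda>p c. if c \<in> C then (case c of (i,j) \<Rightarrow> if p i = j then 1 else 0) else (0::real))"
  define V where "V = row ` derangements (Suc m)"
  define \<delta> where "\<delta> = (\<lambda>(p::nat\<times>nat) c. if c = p then 1 else (0::real))"
  define B where "B = \<delta> ` C"
  have finC: "finite C"
    by (rule finite_subset[of _ "{1..m} \<times> {1..m}"]) (auto simp: C_def)
  have injd: "inj_on \<delta> C"
  proof (rule inj_onI)
    fix p q assume "\<delta> p = \<delta> q"
    then have "\<delta> p p = \<delta> q p" by simp
    then show "p = q" by (simp add: \<delta>_def split: if_splits)
  qed
  have cardC: "card C = m * (m - 1)"
  proof -
    have "C = Sigma {1..m} (\<lambda>i. {1..m} - {i})" by (auto simp: C_def)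
    then have "card C = (\<Sum>i\<in>{1..m}. card ({1..m} - {i}))" by simp
    also have "\<dots> = (\<Sum>i\<in>{1..m}. m - 1)" by (intro sum.cong) auto
    finally show ?thesis by simp
  qed
  have BV: "B \<subseteq> vs.span V"
  proof
    fix v assume "v \<in> B"
    then obtain a b where "(a,b) \<in> C" "v = \<delta> (a,b)" by (auto simp: B_def)
    then show "v \<in> vs.span V"
      using delta_in_span[of a m b] unfolding V_def row_def C_def \<delta>_def by auto
  qed
  have VB: "V \<subseteq> vs.span B"
  proof
    fix v assume "v \<in> V"
    then obtain p where v: "v = row p" by (auto simp: V_def)
    have "v = (\<Sum>c\<in>C. (\<lambda>d. v c * \<delta> c d))"
    proof
      fix x
      have "(\<Sum>c\<in>C. (\<lambda>d. v c * \<delta> c d)) x = (\<Sum>c\<in>C. v c * (if x = c then 1 else 0))"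
        by (simp add: sum_fun_apply \<delta>_def)
      also have "\<dots> = (\<Sum>c\<in>C. if x = c then v c else 0)"
        by (intro sum.cong) auto
      also have "\<dots> = (if x \<in> C then v x else 0)"
        using finC by (simp add: sum.delta)
      also have "\<dots> = v x" by (simp add: v row_def)
      finally show "v x = (\<Sum>c\<in>C. (\<lambda>d. v c * \<delta> c d)) x" by simp
    qed
    also have "\<dots> \<in> vs.span B"
      by (intro vs.span_sum vs.span_scale vs.span_base) (auto simp: B_def)
    finally show "v \<in> vs.span B" .
  qed
  have indep: "vs.independent B"
  proof -
    have finB: "finite B" using finC by (simp add: B_def)
    have "\<not> vs.dependent B"
    proof
      assume "vs.dependent B"
      then obtain u v where uv: "v \<in> B" "u v \<noteq> 0" "(\<Sum>w\<in>B. (\<lambda>d. u w * w d)) = 0"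
        using vs.dependent_finite[OF finB] by auto
      obtain c where c: "c \<in> C" "v = \<delta> c" using uv(1) by (auto simp: B_def)
      have "0 = (\<Sum>w\<in>B. (\<lambda>d. u w * w d)) c" using uv(3) by simp
      also have "\<dots> = (\<Sum>c'\<in>C. u (\<delta> c') * \<delta> c' c)"
        unfolding sum_fun_apply B_def by (simp add: sum.reindex[OF injd])
      also have "\<dots> = (\<Sum>c'\<in>C. if c = c' then u (\<delta> c') else 0)"
        by (intro sum.cong) (auto simp: \<delta>_def)
      also have "\<dots> = u (\<delta> c)" using finC c by (simp add: sum.delta)
      finally show False using uv c by simp
    qed
    then show ?thesis by simp
  qed
  have "vs.span V = vs.span B" using BV VB vs.span_eq by blast
  then have "vs.dim V = vs.dim B" by (metis vs.dim_span)
  also have "\<dots> = card B" using indep by (rule vs.dim_eq_card_independent)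
  also have "\<dots> = card C" unfolding B_def using injd by (rule card_image)
  finally have "vs.dim V = m * (m - 1)" using cardC by simp
  moreover have "mat_rank (derangements n) {(i, j). i \<in> {1..n-1} \<and> j \<in> {1..n-1} \<and> i \<noteq> j}
           (\<lambda>\<pi> (i, j). if \<pi> i = j then 1 else 0) = vs.dim V"
    unfolding mat_rank_def V_def row_def C_def using n by (simp add: m_def[symmetric])
  ultimately show ?thesis by (simp add: n numeral_2_eq_2)
qed

end
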